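(* A topological space $X$ is ultrametrizable in the ordinary sense (i.e. $\mathrm{Ult}(X;\mathbb{R}_{\ge0})\ne\emptyset$) if and only if $\omega_0\in\mathrm{MG}(X)$.
   Context: A linearly ordered Abelian group is an Abelian group with a linear order compatible with addition. For $x,y\in G_{>0}$, $x\asymp y$ iff $y\le nx$ and $x\le my$ for some $n,m\in\mathbb{Z}_{\ge1}$; $\mathrm{Arc}(G)=G_{>0}/\asymp$, ordered by $[x]\preceq[y]$ iff ($nx<y$ for all $n$) or $x\asymp y$; $\mathrm{Arc}(G)^\perp$ is $\mathrm{Arc}(G)$ with a new least element adjoined. For a bottomed linearly ordered set $S$ (least element $\perp_S$, $S^*=S\setminus\{\perp_S\}$), $\chi(S)$ is the least cardinal $\kappa>0$ such that some strictly decreasing family $(s_\alpha)_{\alpha<\kappa}$ in $S^*$ has every $t\in S^*$ bounded below by some $s_\alpha$. A $G$-metric on $X$: $d\colon X^2\to G$ with $d(x,y)=0\iff x=y$, $d\ge0$, symmetric, triangle inequality; $\mathrm{Met}(X;G)$ is the set of $G$-metrics generating the topology of $X$ (via open balls). An $S$-ultrametric: $d\colon X^2\to S$ with $d(x,y)=\perp_S\iff x=y$, symmetric, $d(x,y)\le\max\{d(x,z),d(z,y)\}$; $\mathrm{Ult}(X;S)$ those generating the topology. $\kappa\in\mathrm{MG}(X)$ iff some linearly ordered Abelian group $G$ with $\chi(\mathrm{Arc}(G)^\perp)=\kappa$ has $\mathrm{Met}(X;G)\ne\emptyset$. *)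

theory Defs
  imports "HOL-Analysis.Analysis" "HOL-Algebra.Group"
begin

text \<open>A linearly ordered Abelian group is given by a HOL-Algebra group structure
  G (written multiplicatively: the group operation is \<open>\<otimes>\<close>, the neutral
  element is \<open>\<one>\<close>, and the n-fold sum n x is \<open>x [^] n\<close>) together with
  a relation leq on its carrier that is a linear order compatible with the operation.\<close>

definition lin_ord_ab_group :: "'g monoid \<Rightarrow> ('g \<Rightarrow> 'g \<Rightarrow> bool) \<Rightarrow> bool" where
  "lin_ord_ab_group G leq \<longleftrightarrow>
     comm_group G \<and>
     (\<forall>x\<in>carrier G. leq x x) \<and>
     (\<forall>x\<in>carrier G. \<forall>y\<in>carrier G. leq x y \<and> leq y x \<longrightarrow> x = y) \<and>
     (\<forall>x\<in>carrier G. \<forall>y\<in>carrier G. \<forall>z\<in>carrier G. leq x y \<and> leq y z \<longrightarrow> leq x z) \<and>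
     (\<forall>x\<in>carrier G. \<forall>y\<in>carrier G. leq x y \<or> leq y x) \<and>
     (\<forall>x\<in>carrier G. \<forall>y\<in>carrier G. \<forall>z\<in>carrier G.
        leq x y \<longrightarrow> leq (x \<otimes>\<^bsub>G\<^esub> z) (y \<otimes>\<^bsub>G\<^esub> z))"

definition grp_lt :: "'g monoid \<Rightarrow> ('g \<Rightarrow> 'g \<Rightarrow> bool) \<Rightarrow> 'g \<Rightarrow> 'g \<Rightarrow> bool" where
  "grp_lt G leq x y \<longleftrightarrow> leq x y \<and> x \<noteq> y"

definition grp_pos :: "'g monoid \<Rightarrow> ('g \<Rightarrow> 'g \<Rightarrow> bool) \<Rightarrow> 'g set" where
  "grp_pos G leq = {x \<in> carrier G. grp_lt G leq \<one>\<^bsub>G\<^esub> x}"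

definition arch_equiv :: "'g monoid \<Rightarrow> ('g \<Rightarrow> 'g \<Rightarrow> bool) \<Rightarrow> 'g \<Rightarrow> 'g \<Rightarrow> bool" where
  "arch_equiv G leq x y \<longleftrightarrow>
     (\<exists>n::nat. n \<ge> 1 \<and> leq y (x [^]\<^bsub>G\<^esub> n)) \<and> (\<exists>m::nat. m \<ge> 1 \<and> leq x (y [^]\<^bsub>G\<^esub> m))"

definition arch_rel :: "'g monoid \<Rightarrow> ('g \<Rightarrow> 'g \<Rightarrow> bool) \<Rightarrow> 'g rel" where
  "arch_rel G leq = {(x, y). x \<in> grp_pos G leq \<and> y \<in> grp_pos G leq \<and> arch_equiv G leq x y}"

definition Arc :: "'g monoid \<Rightarrow> ('g \<Rightarrow> 'g \<Rightarrow> bool) \<Rightarrow> 'g set set" where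
  "Arc G leq = grp_pos G leq // arch_rel G leq"

text \<open>Order on \<open>Arc(G)\<close>: \<open>[x] \<preceq> [y]\<close> iff (\<open>n x < y\<close> for all n) or \<open>x \<asymp> y\<close>
  (well defined on classes; we quantify over representatives).\<close>
definition Arc_le :: "'g monoid \<Rightarrow> ('g \<Rightarrow> 'g \<Rightarrow> bool) \<Rightarrow> 'g set \<Rightarrow> 'g set \<Rightarrow> bool" where
  "Arc_le G leq a b \<longleftrightarrow>
     (\<exists>x\<in>a. \<exists>y\<in>b.
        (\<forall>n::nat. n \<ge> 1 \<longrightarrow> grp_lt G leq (x [^]\<^bsub>G\<^esub> n) y) \<or> arch_equiv G leq x y)"

text \<open>\<open>Arc(G)^\<perp>\<close>: \<open>Arc(G)\<close> with a new least element adjoined, represented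
  with the option type (\<open>None\<close> is the new least element).\<close>
definition Arc_bot :: "'g monoid \<Rightarrow> ('g \<Rightarrow> 'g \<Rightarrow> bool) \<Rightarrow> 'g set option set" where
  "Arc_bot G leq = insert None (Some ` Arc G leq)"

definition Arc_bot_le :: "'g monoid \<Rightarrow> ('g \<Rightarrow> 'g \<Rightarrow> bool) \<Rightarrow> 'g set option \<Rightarrow> 'g set option \<Rightarrow> bool" where
  "Arc_bot_le G leq u v \<longleftrightarrow>
     (case u of None \<Rightarrow> True
      | Some a \<Rightarrow> (case v of None \<Rightarrow> False | Some b \<Rightarrow> Arc_le G leq a b))"

text \<open>A bottomed linearly ordered set is given by a carrier S, an order leq and its
  least element bt; \<open>S^* = S - {bt}\<close>.  A strictly decreasing family
  indexed by an ordinal \<open>\<le> \<omega>\<close> is a function \<open>s :: nat \<Rightarrow> _\<close> on the index set I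
  (I = {..<n} for the finite ordinal n, I = UNIV for \<omega>) which is coinitial in \<open>S^*\<close>.\<close>

definition coinitial_dec_family ::
  "'s set \<Rightarrow> ('s \<Rightarrow> 's \<Rightarrow> bool) \<Rightarrow> 's \<Rightarrow> nat set \<Rightarrow> (nat \<Rightarrow> 's) \<Rightarrow> bool" where
  "coinitial_dec_family S leq bt I s \<longleftrightarrow>
     (\<forall>\<alpha>\<in>I. s \<alpha> \<in> S - {bt}) \<and>
     (\<forall>\<alpha>\<in>I. \<forall>\<beta>\<in>I. \<alpha> < \<beta> \<longrightarrow> leq (s \<beta>) (s \<alpha>) \<and> s \<beta> \<noteq> s \<alpha>) \<and>
     (\<forall>t\<in>S - {bt}. \<exists>\<alpha>\<in>I. leq (s \<alpha>) t)"

text \<open>\<open>\<chi>(S) = \<omega>_0\<close>: \<open>\<omega>_0\<close> is the least cardinal \<open>\<kappa> > 0\<close> admitting such a family,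
  i.e. there is one indexed by \<open>\<omega>_0\<close> and none indexed by a cardinal \<open>0 < \<kappa> < \<omega>_0\<close>
  (these are exactly the finite cardinals n \<ge> 1).\<close>
definition chi_is_omega0 :: "'s set \<Rightarrow> ('s \<Rightarrow> 's \<Rightarrow> bool) \<Rightarrow> 's \<Rightarrow> bool" where
  "chi_is_omega0 S leq bt \<longleftrightarrow>
     (\<exists>s. coinitial_dec_family S leq bt UNIV s) \<and>
     (\<forall>n::nat. n \<ge> 1 \<longrightarrow> \<not> (\<exists>s. coinitial_dec_family S leq bt {..<n} s))"

definition is_G_metric ::
  "'a set \<Rightarrow> 'g monoid \<Rightarrow> ('g \<Rightarrow> 'g \<Rightarrow> bool) \<Rightarrow> ('a \<Rightarrow> 'a \<Rightarrow> 'g) \<Rightarrow> bool" where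
  "is_G_metric A G leq d \<longleftrightarrow>
     (\<forall>x\<in>A. \<forall>y\<in>A. d x y \<in> carrier G) \<and>
     (\<forall>x\<in>A. \<forall>y\<in>A. d x y = \<one>\<^bsub>G\<^esub> \<longleftrightarrow> x = y) \<and>
     (\<forall>x\<in>A. \<forall>y\<in>A. leq \<one>\<^bsub>G\<^esub> (d x y)) \<and>
     (\<forall>x\<in>A. \<forall>y\<in>A. d x y = d y x) \<and>
     (\<forall>x\<in>A. \<forall>y\<in>A. \<forall>z\<in>A. leq (d x y) (d x z \<otimes>\<^bsub>G\<^esub> d z y))"

definition G_metric_topology ::
  "'a set \<Rightarrow> 'g monoid \<Rightarrow> ('g \<Rightarrow> 'g \<Rightarrow> bool) \<Rightarrow> ('a \<Rightarrow> 'a \<Rightarrow> 'g) \<Rightarrow> 'a topology" where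
  "G_metric_topology A G leq d =
     topology_generated_by
       {{y \<in> A. grp_lt G leq (d x y) r} | x r. x \<in> A \<and> r \<in> carrier G \<and> grp_lt G leq \<one>\<^bsub>G\<^esub> r}"

definition Met :: "'a topology \<Rightarrow> 'g monoid \<Rightarrow> ('g \<Rightarrow> 'g \<Rightarrow> bool) \<Rightarrow> ('a \<Rightarrow> 'a \<Rightarrow> 'g) set" where
  "Met X G leq = {d. is_G_metric (topspace X) G leq d \<and>
                    G_metric_topology (topspace X) G leq d = X}"

definition is_S_ultrametric ::
  "'a set \<Rightarrow> 's set \<Rightarrow> ('s \<Rightarrow> 's \<Rightarrow> bool) \<Rightarrow> 's \<Rightarrow> ('a \<Rightarrow> 'a \<Rightarrow> 's) \<Rightarrow> bool" where
  "is_S_ultrametric A S leq bt d \<longleftrightarrow>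
     (\<forall>x\<in>A. \<forall>y\<in>A. d x y \<in> S) \<and>
     (\<forall>x\<in>A. \<forall>y\<in>A. d x y = bt \<longleftrightarrow> x = y) \<and>
     (\<forall>x\<in>A. \<forall>y\<in>A. d x y = d y x) \<and>
     (\<forall>x\<in>A. \<forall>y\<in>A. \<forall>z\<in>A. leq (d x y) (d x z) \<or> leq (d x y) (d z y))"

definition S_ultrametric_topology ::
  "'a set \<Rightarrow> 's set \<Rightarrow> ('s \<Rightarrow> 's \<Rightarrow> bool) \<Rightarrow> 's \<Rightarrow> ('a \<Rightarrow> 'a \<Rightarrow> 's) \<Rightarrow> 'a topology" where
  "S_ultrametric_topology A S leq bt d =
     topology_generated_by
       {{y \<in> A. leq (d x y) r \<and> d x y \<noteq> r} | x r. x \<in> A \<and> r \<in> S - {bt}}"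

definition Ult :: "'a topology \<Rightarrow> 's set \<Rightarrow> ('s \<Rightarrow> 's \<Rightarrow> bool) \<Rightarrow> 's \<Rightarrow> ('a \<Rightarrow> 'a \<Rightarrow> 's) set" where
  "Ult X S leq bt = {d. is_S_ultrametric (topspace X) S leq bt d \<and>
                       S_ultrametric_topology (topspace X) S leq bt d = X}"

end

theory Submission
  imports Defs "HOL-Computational_Algebra.Polynomial"
begin


definition ll :: "'g monoid \<Rightarrow> ('g \<Rightarrow> 'g \<Rightarrow> bool) \<Rightarrow> 'g \<Rightarrow> 'g \<Rightarrow> bool" where
  "ll G leq a b \<longleftrightarrow> (\<forall>n::nat. n \<ge> 1 \<longrightarrow> grp_lt G leq (a [^]\<^bsub>G\<^esub> n) b)"

locale olg = comm_group G for G :: "'g monoid" (structure) +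
  fixes leq :: "'g \<Rightarrow> 'g \<Rightarrow> bool"
  assumes refl: "x \<in> carrier G \<Longrightarrow> leq x x"
    and antisym: "x \<in> carrier G \<Longrightarrow> y \<in> carrier G \<Longrightarrow> leq x y \<Longrightarrow> leq y x \<Longrightarrow> x = y"
    and trans: "x \<in> carrier G \<Longrightarrow> y \<in> carrier G \<Longrightarrow> z \<in> carrier G \<Longrightarrow> leq x y \<Longrightarrow> leq y z \<Longrightarrow> leq x z"
    and total: "x \<in> carrier G \<Longrightarrow> y \<in> carrier G \<Longrightarrow> leq x y \<or> leq y x"
    and mono: "x \<in> carrier G \<Longrightarrow> y \<in> carrier G \<Longrightarrow> z \<in> carrier G \<Longrightarrow> leq x y \<Longrightarrow> leq (x \<otimes> z) (y \<otimes> z)"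

lemma olgI: "lin_ord_ab_group G leq \<Longrightarrow> olg G leq"
  unfolding lin_ord_ab_group_def olg_def olg_axioms_def by blast

context olg begin

abbreviation lt where "lt \<equiv> grp_lt G leq"
abbreviation pos where "pos \<equiv> grp_pos G leq"
abbreviation lll where "lll \<equiv> ll G leq"
abbreviation aeq where "aeq \<equiv> arch_equiv G leq"

lemma lt_iff: "lt x y \<longleftrightarrow> leq x y \<and> x \<noteq> y" by (simp add: grp_lt_def)

lemma pos_iff: "a \<in> pos \<longleftrightarrow> a \<in> carrier G \<and> lt \<one> a" by (simp add: grp_pos_def)

lemma not_le: "x \<in> carrier G \<Longrightarrow> y \<in> carrier G \<Longrightarrow> \<not> leq x y \<longleftrightarrow> lt y x"
  using total[of x y] refl[of x] antisym[of x y] unfolding lt_iff by auto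

lemma not_lt: "x \<in> carrier G \<Longrightarrow> y \<in> carrier G \<Longrightarrow> \<not> lt x y \<longleftrightarrow> leq y x"
  using not_le by blast

lemma lt_trans: "x \<in> carrier G \<Longrightarrow> y \<in> carrier G \<Longrightarrow> z \<in> carrier G \<Longrightarrow> lt x y \<Longrightarrow> lt y z \<Longrightarrow> lt x z"
  unfolding lt_iff using trans[of x y z] antisym[of x y] by auto

lemma lt_le_trans: "x \<in> carrier G \<Longrightarrow> y \<in> carrier G \<Longrightarrow> z \<in> carrier G \<Longrightarrow> lt x y \<Longrightarrow> leq y z \<Longrightarrow> lt x z"
  unfolding lt_iff using trans[of x y z] antisym[of x y] by auto

lemma le_lt_trans: "x \<in> carrier G \<Longrightarrow> y \<in> carrier G \<Longrightarrow> z \<in> carrier G \<Longrightarrow> leq x y \<Longrightarrow> lt y z \<Longrightarrow> lt x z"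
  unfolding lt_iff using trans[of x y z] antisym[of y z] by auto

lemma mono_l: "x \<in> carrier G \<Longrightarrow> y \<in> carrier G \<Longrightarrow> z \<in> carrier G \<Longrightarrow> leq x y \<Longrightarrow> leq (z \<otimes> x) (z \<otimes> y)"
  using mono[of x y z] m_comm[of x z] m_comm[of y z] by simp

lemma add_mono: "x \<in> carrier G \<Longrightarrow> y \<in> carrier G \<Longrightarrow> u \<in> carrier G \<Longrightarrow> v \<in> carrier G \<Longrightarrow>
   leq x y \<Longrightarrow> leq u v \<Longrightarrow> leq (x \<otimes> u) (y \<otimes> v)"
  using trans[of "x \<otimes> u" "y \<otimes> u" "y \<otimes> v"] mono[of x y u] mono_l[of u v y] by simp

lemma cancel_le: assumes "x \<in> carrier G" "y \<in> carrier G" "z \<in> carrier G" "leq (x \<otimes> z) (y \<otimes> z)"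
  shows "leq x y"
proof -
  have "leq ((x \<otimes> z) \<otimes> inv z) ((y \<otimes> z) \<otimes> inv z)" using assms mono by simp
  then show ?thesis using assms by (simp add: m_assoc)
qed

lemma lt_mono: "x \<in> carrier G \<Longrightarrow> y \<in> carrier G \<Longrightarrow> z \<in> carrier G \<Longrightarrow> lt x y \<Longrightarrow> lt (x \<otimes> z) (y \<otimes> z)"
  unfolding lt_iff using mono by auto

lemma lt_add_le: "x \<in> carrier G \<Longrightarrow> y \<in> carrier G \<Longrightarrow> u \<in> carrier G \<Longrightarrow> v \<in> carrier G \<Longrightarrow>
   lt x y \<Longrightarrow> leq u v \<Longrightarrow> lt (x \<otimes> u) (y \<otimes> v)"
  using lt_le_trans[of "x \<otimes> u" "y \<otimes> u" "y \<otimes> v"] lt_mono[of x y u] mono_l[of u v y] by simp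

lemma le_mult_nonneg: "x \<in> carrier G \<Longrightarrow> u \<in> carrier G \<Longrightarrow> leq \<one> u \<Longrightarrow> leq x (x \<otimes> u)"
  using mono_l[of \<one> u x] by simp

lemma pow_mono: "x \<in> carrier G \<Longrightarrow> y \<in> carrier G \<Longrightarrow> leq x y \<Longrightarrow> leq (x [^] (n::nat)) (y [^] n)"
  by (induction n) (auto simp: refl intro: add_mono)

lemma pow_lt_cancel: "x \<in> carrier G \<Longrightarrow> y \<in> carrier G \<Longrightarrow> lt (x [^] (n::nat)) (y [^] n) \<Longrightarrow> lt x y"
  by (metis nat_pow_closed not_lt pow_mono)

lemma nonneg_pow: "x \<in> carrier G \<Longrightarrow> leq \<one> x \<Longrightarrow> leq \<one> (x [^] (n::nat))"
  using pow_mono[of \<one> x n] by simp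

lemma pow_one1[simp]: "x \<in> carrier G \<Longrightarrow> x [^] (1::nat) = x"
  by (simp add: numeral_nat)

lemma pow_le_pow: assumes "x \<in> carrier G" "leq \<one> x" "m \<le> n" shows "leq (x [^] (m::nat)) (x [^] n)"
proof -
  have "x [^] n = x [^] m \<otimes> x [^] (n - m)" using assms by (simp add: nat_pow_mult)
  then show ?thesis using assms le_mult_nonneg nonneg_pow by simp
qed

lemma ll_lt: "a \<in> carrier G \<Longrightarrow> lll a b \<Longrightarrow> lt a b"
  unfolding ll_def by (metis le_refl pow_one1)

lemma ll_not_le: "a \<in> carrier G \<Longrightarrow> b \<in> carrier G \<Longrightarrow> lll a b \<Longrightarrow> n \<ge> 1 \<Longrightarrow> leq b (a [^] (n::nat)) \<Longrightarrow> False"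
  unfolding ll_def by (meson nat_pow_closed not_le)

lemma trichotomy: assumes "a \<in> carrier G" "b \<in> carrier G" shows "lll a b \<or> aeq a b \<or> lll b a"
proof -
  { assume "\<not> lll a b" "\<not> lll b a"
    then obtain n m :: nat where "n \<ge> 1" "\<not> lt (a [^] n) b" "m \<ge> 1" "\<not> lt (b [^] m) a"
      unfolding ll_def by blast
    then have "aeq a b" unfolding arch_equiv_def using assms not_lt by auto }
  then show ?thesis by blast
qed

lemma ll_asym: "a \<in> carrier G \<Longrightarrow> b \<in> carrier G \<Longrightarrow> lll a b \<Longrightarrow> \<not> lll b a"
  using ll_lt[of a b] ll_lt[of b a] antisym[of a b] unfolding lt_iff by auto

lemma ll_not_aeq: "a \<in> carrier G \<Longrightarrow> b \<in> carrier G \<Longrightarrow> lll a b \<Longrightarrow> \<not> aeq a b"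
  unfolding arch_equiv_def using ll_not_le by blast

lemma aeq_sym: "aeq a b \<Longrightarrow> aeq b a" unfolding arch_equiv_def by blast

lemma aeq_refl: "a \<in> carrier G \<Longrightarrow> aeq a a" unfolding arch_equiv_def
  using refl by (metis order_refl pow_one1)

lemma aeq_trans: assumes "a \<in> carrier G" "b \<in> carrier G" "c \<in> carrier G" "aeq a b" "aeq b c"
  shows "aeq a c"
proof -
  have *: "\<exists>k::nat. k \<ge> 1 \<and> leq z (x [^] k)"
    if "x \<in> carrier G" "y \<in> carrier G" "z \<in> carrier G" "n \<ge> 1" "leq y (x [^] (n::nat))"
       "m \<ge> 1" "leq z (y [^] (m::nat))" for x y z n m
  proof -
    have "leq (y [^] m) ((x [^] n) [^] m)" using that pow_mono by simp
    then have "leq z (x [^] (n * m))" using that trans[of z "y [^] m" "x [^] (n * m)"] by (simp add: nat_pow_pow)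
    then show ?thesis using that by (intro exI[of _ "n*m"]) simp
  qed
  obtain n m p q :: nat where "n \<ge> 1" "leq b (a [^] n)" "m \<ge> 1" "leq a (b [^] m)"
    "p \<ge> 1" "leq c (b [^] p)" "q \<ge> 1" "leq b (c [^] q)"
    using assms(4,5) unfolding arch_equiv_def by blast
  then show ?thesis using assms *[of a b c n p] *[of c b a q m] unfolding arch_equiv_def by blast
qed

lemma ll_aeq_left: assumes "a \<in> carrier G" "b \<in> carrier G" "a' \<in> carrier G" "lll a b" "aeq a a'"
  shows "lll a' b"
  unfolding ll_def
proof (intro allI impI)
  fix k :: nat assume k: "k \<ge> 1"
  obtain m :: nat where m: "m \<ge> 1" "leq a' (a [^] m)" using assms unfolding arch_equiv_def by blast
  have "leq (a' [^] k) ((a [^] m) [^] k)" using m assms pow_mono by simp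
  moreover have "lt (a [^] (m * k)) b" using assms k m unfolding ll_def by simp
  ultimately show "lt (a' [^] k) b" using assms le_lt_trans[of "a' [^] k" "a [^] (m*k)" b] by (simp add: nat_pow_pow)
qed

lemma ll_aeq_right: assumes "a \<in> carrier G" "b \<in> carrier G" "b' \<in> carrier G" "lll a b" "aeq b b'"
  shows "lll a b'"
  unfolding ll_def
proof (intro allI impI)
  fix k :: nat assume k: "k \<ge> 1"
  obtain m :: nat where m: "m \<ge> 1" "leq b (b' [^] m)" using assms unfolding arch_equiv_def by blast
  show "lt (a [^] k) b'"
  proof (rule ccontr)
    assume "\<not> lt (a [^] k) b'"
    then have "leq b' (a [^] k)" using assms not_lt by simp
    then have "leq (b' [^] m) ((a [^] k) [^] m)" using assms pow_mono by simp
    then have "leq b (a [^] (k * m))" using m assms trans[of b "b' [^] m" "a [^] (k * m)"] by (simp add: nat_pow_pow)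
    moreover have "1 \<le> k * m" using k m by (metis mult_le_mono nat_mult_1)
    ultimately show False using ll_not_le[OF assms(1,2,4), of "k * m"] by simp
  qed
qed

lemma ll_trans: "a \<in> carrier G \<Longrightarrow> b \<in> carrier G \<Longrightarrow> c \<in> carrier G \<Longrightarrow> lll a b \<Longrightarrow> lll b c \<Longrightarrow> lll a c"
  unfolding ll_def by (metis le_refl lt_trans nat_pow_closed pow_one1)

lemma ll_le: assumes "a \<in> carrier G" "b \<in> carrier G" "g \<in> carrier G" "leq a b" "lll b g"
  shows "lll a g"
  using assms unfolding ll_def by (meson le_lt_trans nat_pow_closed pow_mono)

lemma ll_one: "g \<in> carrier G \<Longrightarrow> lt \<one> g \<Longrightarrow> lll \<one> g"
  unfolding ll_def by simp

lemma ll_mult: assumes "a \<in> carrier G" "b \<in> carrier G" "g \<in> carrier G" "leq \<one> a" "leq \<one> b"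
  "lll a g" "lll b g" shows "lll (a \<otimes> b) g"
proof -
  have *: "lll (x \<otimes> y) g" if "x \<in> carrier G" "y \<in> carrier G" "leq x y" "lll y g" for x y
    unfolding ll_def
  proof (intro allI impI)
    fix k :: nat assume k: "k \<ge> 1"
    have "(x \<otimes> y) [^] k = x [^] k \<otimes> y [^] k" using that by (simp add: nat_pow_distrib)
    moreover have "leq (x [^] k \<otimes> y [^] k) (y [^] k \<otimes> y [^] k)"
      using that pow_mono by (simp add: mono)
    moreover have "y [^] k \<otimes> y [^] k = y [^] (k + k)" using that by (simp add: nat_pow_mult)
    moreover have "lt (y [^] (k + k)) g" using \<open>lll y g\<close> k unfolding ll_def by simp
    ultimately show "lt ((x \<otimes> y) [^] k) g" using that assms le_lt_trans[of "x [^] k \<otimes> y [^] k" "y [^] (k+k)" g] by simp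
  qed
  show ?thesis
  proof (cases "leq a b")
    case True then show ?thesis using *[of a b] assms by simp
  next
    case False then have "leq b a" using total[of a b] assms by simp
    then have "lll (b \<otimes> a) g" using *[of b a] assms by simp
    moreover have "b \<otimes> a = a \<otimes> b" using m_comm[of a b] assms by simp
    ultimately show ?thesis by simp
  qed
qed

lemma ll_clsle: assumes "a \<in> carrier G" "b \<in> carrier G" "c \<in> carrier G" "lll a b" "\<not> lll c b"
  shows "lll a c"
  using trichotomy[of b c] assms ll_trans[of a b c] ll_aeq_right[of a b c] by auto

lemma clsle_trans: assumes "a \<in> carrier G" "b \<in> carrier G" "c \<in> carrier G" "\<not> lll b a" "\<not> lll c b"
  shows "\<not> lll c a"
  using assms ll_clsle[of c a b] by auto

lemma le_not_ll: "a \<in> carrier G \<Longrightarrow> b \<in> carrier G \<Longrightarrow> leq b a \<Longrightarrow> \<not> lll a b"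
  using ll_lt[of a b] antisym[of a b] unfolding lt_iff by auto

end


definition goodseq :: "'g monoid \<Rightarrow> ('g \<Rightarrow> 'g \<Rightarrow> bool) \<Rightarrow> (nat \<Rightarrow> 'g) \<Rightarrow> bool" where
  "goodseq G leq g \<longleftrightarrow> (\<forall>n. g n \<in> grp_pos G leq) \<and> (\<forall>n. ll G leq (g (Suc n)) (g n)) \<and>
     (\<forall>t\<in>grp_pos G leq. \<exists>n. \<not> ll G leq t (g n))"

context olg begin

abbreviation rel where "rel \<equiv> arch_rel G leq"

lemma pos_carrier: "a \<in> pos \<Longrightarrow> a \<in> carrier G" by (simp add: grp_pos_def)

lemma equiv_rel: "equiv pos rel"
proof (rule equivI)
  show "rel \<subseteq> pos \<times> pos" unfolding arch_rel_def by auto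
  show "refl_on pos rel" unfolding refl_on_def arch_rel_def using aeq_refl pos_carrier by auto
  show "sym rel" unfolding sym_def arch_rel_def using aeq_sym by auto
  show "Relation.trans rel" unfolding trans_def arch_rel_def using aeq_trans pos_carrier by blast
qed

lemma cls_mem: "b \<in> rel``{a} \<longleftrightarrow> a \<in> pos \<and> b \<in> pos \<and> aeq a b"
  unfolding arch_rel_def by auto

lemma cls_eq: "a \<in> pos \<Longrightarrow> b \<in> pos \<Longrightarrow> rel``{a} = rel``{b} \<longleftrightarrow> aeq a b"
  using eq_equiv_class_iff[OF equiv_rel] unfolding arch_rel_def by auto

lemma cls_Arc: "a \<in> pos \<Longrightarrow> rel``{a} \<in> Arc G leq"
  unfolding Arc_def by (rule quotientI)

lemma Arc_elem: "A \<in> Arc G leq \<Longrightarrow> \<exists>a\<in>pos. A = rel``{a}"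
  unfolding Arc_def by (erule quotientE) auto

lemma Arc_le_cls: assumes a: "a \<in> pos" and b: "b \<in> pos"
  shows "Arc_le G leq (rel``{a}) (rel``{b}) \<longleftrightarrow> \<not> lll b a"
proof
  assume "Arc_le G leq (rel``{a}) (rel``{b})"
  then obtain x y where xy: "x \<in> rel``{a}" "y \<in> rel``{b}" "lll x y \<or> aeq x y"
    unfolding Arc_le_def ll_def by blast
  then have x: "x \<in> pos" "aeq a x" and y: "y \<in> pos" "aeq b y" using cls_mem by auto
  show "\<not> lll b a"
  proof
    assume "lll b a"
    have ac: "a \<in> carrier G" "b \<in> carrier G" "x \<in> carrier G" "y \<in> carrier G"
      using a b x y pos_carrier by auto
    have "lll y a" using ll_aeq_left[OF ac(2,1,4) \<open>lll b a\<close> y(2)] .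
    then have "lll y x" using ll_aeq_right[OF ac(4,1,3) _ x(2)] by simp
    moreover have "aeq y x" if "aeq x y" using aeq_sym[OF that] .
    ultimately show False using xy(3) ll_asym[OF ac(4,3)] ll_not_aeq[OF ac(4,3)] by blast
  qed
next
  assume "\<not> lll b a"
  then have "lll a b \<or> aeq a b" using trichotomy[of a b] a b pos_carrier by blast
  moreover have "a \<in> rel``{a}" "b \<in> rel``{b}" using cls_mem aeq_refl a b pos_carrier by auto
  ultimately show "Arc_le G leq (rel``{a}) (rel``{b})"
    unfolding Arc_le_def ll_def by blast
qed

lemma Arc_bot_minus: "Arc_bot G leq - {None} = Some ` Arc G leq"
  unfolding Arc_bot_def by auto

lemma Arc_bot_le_Some: "Arc_bot_le G leq (Some A) (Some B) = Arc_le G leq A B"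
  unfolding Arc_bot_le_def by simp

lemma goodseq_mono: assumes "goodseq G leq g" "m < n" shows "lll (g n) (g m)"
  using assms(2)
proof (induction n)
  case 0 then show ?case by simp
next
  case (Suc n)
  have gs: "\<And>k. g k \<in> carrier G" "lll (g (Suc n)) (g n)"
    using assms(1) unfolding goodseq_def by (auto simp: pos_carrier)
  show ?case
  proof (cases "m = n")
    case True then show ?thesis using gs by simp
  next
    case False then have "lll (g n) (g m)" using Suc by simp
    then show ?thesis using ll_trans[of "g (Suc n)" "g n" "g m"] gs by simp
  qed
qed

lemma goodseq_chi: assumes gs: "goodseq G leq g"
  shows "chi_is_omega0 (Arc_bot G leq) (Arc_bot_le G leq) None"
proof -
  have gpos: "\<And>n. g n \<in> pos" and gsuc: "\<And>n. lll (g (Suc n)) (g n)"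
    and gco: "\<And>t. t \<in> pos \<Longrightarrow> \<exists>n. \<not> lll t (g n)"
    using gs unfolding goodseq_def by auto
  have gc: "\<And>n. g n \<in> carrier G" using gpos pos_carrier by auto
  define s where "s n = Some (rel``{g n})" for n
  have part1: "coinitial_dec_family (Arc_bot G leq) (Arc_bot_le G leq) None UNIV s"
    unfolding coinitial_dec_family_def
  proof (intro conjI ballI impI)
    fix \<alpha> :: nat show "s \<alpha> \<in> Arc_bot G leq - {None}"
      unfolding s_def Arc_bot_minus using cls_Arc gpos by auto
  next
    fix \<alpha> \<beta> :: nat assume "\<alpha> < \<beta>"
    then have l: "lll (g \<beta>) (g \<alpha>)" using goodseq_mono gs by blast
    show "Arc_bot_le G leq (s \<beta>) (s \<alpha>)"
      unfolding s_def Arc_bot_le_Some using Arc_le_cls[OF gpos gpos] ll_asym[OF gc gc l] by simp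
    show "s \<beta> \<noteq> s \<alpha>"
      unfolding s_def using cls_eq[OF gpos gpos] ll_not_aeq[OF gc gc l] by simp
  next
    fix t assume "t \<in> Arc_bot G leq - {None}"
    then obtain a where a: "a \<in> pos" "t = Some (rel``{a})" unfolding Arc_bot_minus
      using Arc_elem by blast
    obtain n where "\<not> lll a (g n)" using gco a by blast
    then show "\<exists>\<alpha>\<in>UNIV. Arc_bot_le G leq (s \<alpha>) t"
      unfolding s_def a Arc_bot_le_Some using Arc_le_cls[OF gpos a(1)] by blast
  qed
  have part2: False if n1: "n \<ge> 1" and fam: "coinitial_dec_family (Arc_bot G leq) (Arc_bot_le G leq) None {..<n} f"
    for n f
  proof -
    have fin: "\<And>\<alpha>. \<alpha> < n \<Longrightarrow> f \<alpha> \<in> Some ` Arc G leq" using fam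
      unfolding coinitial_dec_family_def Arc_bot_minus by auto
    have fdec: "\<And>\<alpha> \<beta>. \<alpha> < n \<Longrightarrow> \<beta> < n \<Longrightarrow> \<alpha> < \<beta> \<Longrightarrow> Arc_bot_le G leq (f \<beta>) (f \<alpha>)"
      using fam unfolding coinitial_dec_family_def by auto
    have fco: "\<And>t. t \<in> Some ` Arc G leq \<Longrightarrow> \<exists>\<alpha><n. Arc_bot_le G leq (f \<alpha>) t"
      using fam unfolding coinitial_dec_family_def Arc_bot_minus by auto
    obtain b where b: "b \<in> pos" "f (n - 1) = Some (rel``{b})"
      using fin[of "n - 1"] n1 Arc_elem by fastforce
    obtain k where k: "\<not> lll b (g k)" using gco b by blast
    obtain \<alpha> where \<alpha>: "\<alpha> < n" "Arc_bot_le G leq (f \<alpha>) (Some (rel``{g (Suc k)}))"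
      using fco[of "Some (rel``{g (Suc k)})"] cls_Arc gpos by blast
    obtain c where c: "c \<in> pos" "f \<alpha> = Some (rel``{c})"
      using fin[of \<alpha>] \<alpha> Arc_elem by fastforce
    have c1: "\<not> lll (g (Suc k)) c" using \<alpha> c Arc_bot_le_Some Arc_le_cls[OF c(1) gpos] by simp
    have "Arc_bot_le G leq (f (n - 1)) (f \<alpha>)"
    proof (cases "\<alpha> = n - 1")
      case True
      then show ?thesis using b Arc_bot_le_Some Arc_le_cls[OF b(1) b(1)]
          ll_asym[of b b] pos_carrier by auto
    next
      case False then show ?thesis using fdec[of \<alpha> "n - 1"] \<alpha> by simp
    qed
    then have c2: "\<not> lll c b" using b c Arc_bot_le_Some Arc_le_cls[OF b(1) c(1)] by simp
    have "\<not> lll c (g k)" using clsle_trans[of "g k" b c] k c2 gc b c pos_carrier by blast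
    then have "\<not> lll (g (Suc k)) (g k)" using clsle_trans[of "g k" c "g (Suc k)"] c1 gc c pos_carrier by blast
    then show False using gsuc by blast
  qed
  show ?thesis unfolding chi_is_omega0_def using part1 part2 by blast
qed

lemma chi_goodseq: assumes "chi_is_omega0 (Arc_bot G leq) (Arc_bot_le G leq) None"
  shows "\<exists>g. goodseq G leq g"
proof -
  obtain s where fam: "coinitial_dec_family (Arc_bot G leq) (Arc_bot_le G leq) None UNIV s"
    using assms unfolding chi_is_omega0_def by blast
  have "\<forall>n. \<exists>a. a \<in> pos \<and> s n = Some (rel``{a})"
  proof
    fix n
    have "s n \<in> Some ` Arc G leq" using fam unfolding coinitial_dec_family_def Arc_bot_minus by auto
    then show "\<exists>a. a \<in> pos \<and> s n = Some (rel``{a})" using Arc_elem by fastforce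
  qed
  then obtain g where g: "\<And>n. g n \<in> pos" "\<And>n. s n = Some (rel``{g n})" by metis
  have gc: "\<And>n. g n \<in> carrier G" using g pos_carrier by auto
  have "lll (g (Suc n)) (g n)" for n
  proof -
    have "Arc_bot_le G leq (s (Suc n)) (s n)" "s (Suc n) \<noteq> s n"
      using fam unfolding coinitial_dec_family_def by auto
    then have "\<not> lll (g n) (g (Suc n))" "\<not> aeq (g (Suc n)) (g n)"
      using g Arc_bot_le_Some Arc_le_cls[OF g(1) g(1)] cls_eq[OF g(1) g(1)] by auto
    then show ?thesis using trichotomy[OF gc gc] by blast
  qed
  moreover have "\<exists>n. \<not> lll t (g n)" if t: "t \<in> pos" for t
  proof -
    have "Some (rel``{t}) \<in> Arc_bot G leq - {None}" unfolding Arc_bot_minus using cls_Arc t by blast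
    then obtain n where "Arc_bot_le G leq (s n) (Some (rel``{t}))"
      using fam unfolding coinitial_dec_family_def by blast
    then show ?thesis using g Arc_bot_le_Some Arc_le_cls[OF g(1) t] by auto
  qed
  ultimately show ?thesis unfolding goodseq_def using g by blast
qed

end


lemma gen_open_sub:
  assumes "\<And>U p. U \<in> S \<Longrightarrow> p \<in> U \<Longrightarrow> \<exists>V\<in>T. p \<in> V \<and> V \<subseteq> U"
    and "generate_topology_on S W"
  shows "generate_topology_on T W"
  using assms(2)
proof induct
  case Empty then show ?case by (rule generate_topology_on.Empty)
next
  case (Int a b) then show ?case by (simp add: generate_topology_on.Int)
next
  case (UN K) then show ?case by (simp add: generate_topology_on.UN)
next
  case (Basis s)
  have "s = \<Union>{V\<in>T. V \<subseteq> s}" using assms(1)[OF Basis] by blast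
  moreover have "generate_topology_on T (\<Union>{V\<in>T. V \<subseteq> s})"
    by (rule generate_topology_on.UN) (auto intro: generate_topology_on.Basis)
  ultimately show ?case by simp
qed

lemma gen_top_eq:
  assumes "\<And>U p. U \<in> S \<Longrightarrow> p \<in> U \<Longrightarrow> \<exists>V\<in>T. p \<in> V \<and> V \<subseteq> U"
    and "\<And>U p. U \<in> T \<Longrightarrow> p \<in> U \<Longrightarrow> \<exists>V\<in>S. p \<in> V \<and> V \<subseteq> U"
  shows "topology_generated_by S = topology_generated_by T"
  unfolding topology_eq openin_topology_generated_by_iff
  using gen_open_sub[OF assms(1)] gen_open_sub[OF assms(2)] by blast

lemma ultra_ball:
  assumes "is_S_ultrametric A {0::real..} (\<le>) 0 d" "x \<in> A" "p \<in> A" "z \<in> A"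
    "d x p < r" "d p z < r"
  shows "d x z < r"
  using assms unfolding is_S_ultrametric_def by fastforce

lemma half_pow_lt: "0 < (r::real) \<Longrightarrow> \<exists>n. (1/2::real)^n < r"
  using real_arch_pow_inv[of r "1/2::real"] by simp

definition dofD :: "'g monoid \<Rightarrow> ('g \<Rightarrow> 'g \<Rightarrow> bool) \<Rightarrow> (nat \<Rightarrow> 'g) \<Rightarrow> ('a \<Rightarrow> 'a \<Rightarrow> 'g) \<Rightarrow> 'a \<Rightarrow> 'a \<Rightarrow> real" where
  "dofD G leq g D x y = (if x = y then 0 else (1/2::real) ^ (LEAST j. \<not> ll G leq (D x y) (g j)))"

context olg begin

lemma llseq_mono: assumes "\<And>k. g k \<in> carrier G" "\<And>k. lll (g (Suc k)) (g k)" "m < n"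
  shows "lll (g n) (g m)"
  using assms(3)
proof (induction n)
  case 0 then show ?case by simp
next
  case (Suc n)
  show ?case
  proof (cases "m = n")
    case True then show ?thesis using assms by simp
  next
    case False then have "lll (g n) (g m)" using Suc by simp
    then show ?thesis using ll_trans[of "g (Suc n)" "g n" "g m"] assms by simp
  qed
qed

lemma Gmetric_facts:
  assumes "is_G_metric A G leq D" "x \<in> A" "y \<in> A"
  shows "D x y \<in> carrier G" "leq \<one> (D x y)" "D x x = \<one>" "x \<noteq> y \<Longrightarrow> D x y \<in> pos"
proof -
  note h0 = assms(1)[unfolded is_G_metric_def]
  note h = h0[THEN conjunct1] h0[THEN conjunct2, THEN conjunct1] h0[THEN conjunct2, THEN conjunct2, THEN conjunct1]
  show c: "D x y \<in> carrier G" using h(1) assms(2,3) by simp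
  show l: "leq \<one> (D x y)" using h(3) assms(2,3) by simp
  show "D x x = \<one>" using h(2) assms(2) by simp
  assume "x \<noteq> y"
  then have "D x y \<noteq> \<one>" using h(2) assms(2,3) by simp
  then show "D x y \<in> pos" unfolding grp_pos_def grp_lt_def using c l by simp
qed

lemma dofD_ball:
  assumes gs: "goodseq G leq g" and D: "is_G_metric A G leq D" and xy: "x \<in> A" "y \<in> A"
  shows "dofD G leq g D x y < (1/2)^n \<longleftrightarrow> lll (D x y) (g n)"
proof -
  have gpos: "\<And>n. g n \<in> pos" and gsuc: "\<And>n. lll (g (Suc n)) (g n)"
    and gco: "\<And>t. t \<in> pos \<Longrightarrow> \<exists>n. \<not> lll t (g n)"
    using gs unfolding goodseq_def by auto
  have gc: "\<And>n. g n \<in> carrier G" using gpos pos_carrier by auto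
  show ?thesis
  proof (cases "x = y")
    case True
    then show ?thesis using Gmetric_facts[OF D xy(1) xy(1)] ll_one[OF gc] gpos
      unfolding dofD_def pos_iff by simp
  next
    case False
    let ?v = "D x y"
    have v: "?v \<in> pos" "?v \<in> carrier G" using Gmetric_facts[OF D xy] False pos_carrier by auto
    define N where "N = (LEAST j. \<not> lll ?v (g j))"
    obtain j where j: "\<not> lll ?v (g j)" using gco v by blast
    have N: "\<not> lll ?v (g N)" unfolding N_def using LeastI[of "\<lambda>j. \<not> lll ?v (g j)", OF j] .
    have d: "dofD G leq g D x y = (1/2)^N" unfolding dofD_def N_def using False by simp
    have "n < N \<longleftrightarrow> lll ?v (g n)"
    proof
      assume "n < N" then show "lll ?v (g n)" unfolding N_def using not_less_Least by blast
    next
      assume l: "lll ?v (g n)"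
      show "n < N"
      proof (rule ccontr)
        assume "\<not> n < N"
        then have "N = n \<or> N < n" by auto
        then show False
        proof
          assume "N = n" then show False using N l by simp
        next
          assume "N < n"
          then have "lll (g n) (g N)" using llseq_mono[of g, OF gc gsuc] by blast
          then have "lll ?v (g N)" using ll_trans[OF v(2) gc gc l] by blast
          then show False using N by simp
        qed
      qed
    qed
    then show ?thesis unfolding d by simp
  qed
qed

lemma dofD_ultra:
  assumes gs: "goodseq G leq g" and D: "is_G_metric A G leq D"
  shows "is_S_ultrametric A {0::real..} (\<le>) 0 (dofD G leq g D)"
proof -
  let ?d = "dofD G leq g D"
  have gpos: "\<And>n. g n \<in> pos" using gs unfolding goodseq_def by auto
  have gc: "\<And>n. g n \<in> carrier G" using gpos pos_carrier by auto
  have ultra: "?d x y \<le> ?d x z \<or> ?d x y \<le> ?d z y" if xyz: "x \<in> A" "y \<in> A" "z \<in> A" for x y z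
  proof (rule ccontr)
    assume "\<not> (?d x y \<le> ?d x z \<or> ?d x y \<le> ?d z y)"
    then have lt1: "?d x z < ?d x y" "?d z y < ?d x y" by auto
    have nn: "0 \<le> ?d x z" unfolding dofD_def by simp
    have "x \<noteq> y" proof assume "x = y" then have "?d x y = 0" unfolding dofD_def by simp
      then show False using lt1 nn by simp qed
    then obtain N where N: "?d x y = (1/2)^N" unfolding dofD_def by simp
    have "lll (D x z) (g N)" "lll (D z y) (g N)"
      using lt1 N dofD_ball[OF gs D] xyz by auto
    then have "lll (D x z \<otimes> D z y) (g N)"
      using ll_mult Gmetric_facts[OF D] xyz gc by simp
    moreover have "leq (D x y) (D x z \<otimes> D z y)" using D xyz unfolding is_G_metric_def by blast
    ultimately have "lll (D x y) (g N)" using ll_le[of "D x y" "D x z \<otimes> D z y" "g N"]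
      Gmetric_facts[OF D] xyz gc by simp
    then have "?d x y < (1/2)^N" using dofD_ball[OF gs D] xyz by simp
    then show False using N by simp
  qed
  show ?thesis unfolding is_S_ultrametric_def
  proof (intro conjI ballI)
    fix x y assume "x \<in> A" "y \<in> A"
    show "?d x y \<in> {0..}" unfolding dofD_def by simp
    show "(?d x y = 0) = (x = y)" unfolding dofD_def by simp
    show "?d x y = ?d y x" unfolding dofD_def using D \<open>x \<in> A\<close> \<open>y \<in> A\<close>
      unfolding is_G_metric_def by auto
  next
    fix x y z assume "x \<in> A" "y \<in> A" "z \<in> A"
    then show "?d x y \<le> ?d x z \<or> ?d x y \<le> ?d z y" using ultra by blast
  qed
qed

lemma dofD_top:
  assumes gs: "goodseq G leq g" and D: "is_G_metric A G leq D"
  shows "S_ultrametric_topology A {0::real..} (\<le>) 0 (dofD G leq g D) = G_metric_topology A G leq D"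
proof -
  let ?d = "dofD G leq g D"
  have gpos: "\<And>n. g n \<in> pos" and gsuc: "\<And>n. lll (g (Suc n)) (g n)"
    and gco: "\<And>t. t \<in> pos \<Longrightarrow> \<exists>n. \<not> lll t (g n)"
    using gs unfolding goodseq_def by auto
  have gc: "\<And>n. g n \<in> carrier G" using gpos pos_carrier by auto
  have U: "is_S_ultrametric A {0::real..} (\<le>) 0 ?d" by (rule dofD_ultra[OF gs D])
  show ?thesis
    unfolding S_ultrametric_topology_def G_metric_topology_def
  proof (rule gen_top_eq)
    fix U p assume "U \<in> {{y \<in> A. ?d x y \<le> r \<and> ?d x y \<noteq> r} | x r. x \<in> A \<and> r \<in> {0..} - {0}}" "p \<in> U"
    then obtain x r where xr0: "x \<in> A" "r \<in> {0..} - {0}" "U = {y \<in> A. ?d x y \<le> r \<and> ?d x y \<noteq> r}"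
      by blast
    then have xr: "x \<in> A" "r > 0" "U = {y \<in> A. ?d x y < r}" by auto
    have p: "p \<in> A" "?d x p < r" using xr \<open>p \<in> U\<close> by auto
    obtain n where n: "(1/2)^n < r" using half_pow_lt[OF xr(2)] by blast
    let ?V = "{y \<in> A. lt (D p y) (g (Suc n))}"
    have "?V \<in> {{y \<in> A. lt (D x y) r} | x r. x \<in> A \<and> r \<in> carrier G \<and> lt \<one> r}"
      using p gpos unfolding pos_iff by blast
    moreover have "p \<in> ?V" using p gpos Gmetric_facts[OF D p(1) p(1)] unfolding pos_iff by simp
    moreover have "?V \<subseteq> U"
    proof
      fix z assume z: "z \<in> ?V"
      then have "leq (D p z) (g (Suc n))" "D p z \<in> carrier G" using lt_iff Gmetric_facts[OF D p(1)] by auto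
      then have "lll (D p z) (g n)" using ll_le[of "D p z" "g (Suc n)" "g n"] gsuc gc by simp
      then have "?d p z < (1/2)^n" using dofD_ball[OF gs D p(1)] z by simp
      then have "?d p z < r" using n by simp
      then show "z \<in> U" using ultra_ball[OF U xr(1) p(1) _ p(2)] z xr(3) by simp
    qed
    ultimately show "\<exists>V\<in>{{y \<in> A. lt (D x y) r} | x r. x \<in> A \<and> r \<in> carrier G \<and> lt \<one> r}. p \<in> V \<and> V \<subseteq> U"
      by blast
  next
    fix U p assume "U \<in> {{y \<in> A. lt (D x y) r} | x r. x \<in> A \<and> r \<in> carrier G \<and> lt \<one> r}" "p \<in> U"
    then obtain x r where xr: "x \<in> A" "r \<in> carrier G" "lt \<one> r" "U = {y \<in> A. lt (D x y) r}" by blast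
    have p: "p \<in> A" "lt (D x p) r" using xr \<open>p \<in> U\<close> by auto
    have Dxp: "D x p \<in> carrier G" using Gmetric_facts[OF D xr(1) p(1)] by simp
    define r' where "r' = inv (D x p) \<otimes> r"
    have r'c: "r' \<in> carrier G" unfolding r'_def using Dxp xr by simp
    have "lt (inv (D x p) \<otimes> D x p) (inv (D x p) \<otimes> r)"
      using lt_mono[OF Dxp xr(2) inv_closed[OF Dxp] p(2)] m_comm Dxp xr(2) by simp
    then have r'pos: "r' \<in> pos" unfolding r'_def pos_iff using Dxp xr by simp
    have r'eq: "D x p \<otimes> r' = r" unfolding r'_def using Dxp xr by (simp add: m_assoc[symmetric])
    obtain n where n: "\<not> lll r' (g n)" using gco r'pos by blast
    let ?V = "{y \<in> A. ?d p y \<le> (1/2)^n \<and> ?d p y \<noteq> (1/2)^n}"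
    have "?V \<in> {{y \<in> A. ?d x y \<le> r \<and> ?d x y \<noteq> r} | x r. x \<in> A \<and> r \<in> {0..} - {0}}"
      using p by force
    moreover have "p \<in> ?V" using p unfolding dofD_def by simp
    moreover have "?V \<subseteq> U"
    proof
      fix z assume z: "z \<in> ?V"
      then have zA: "z \<in> A" and "?d p z < (1/2)^n" by auto
      then have "lll (D p z) (g n)" using dofD_ball[OF gs D p(1) zA] by simp
      then have "lll (D p z) r'" using ll_clsle[of "D p z" "g n" r'] n gc r'c Gmetric_facts[OF D p(1) zA] by simp
      then have "lt (D p z) r'" using ll_lt Gmetric_facts[OF D p(1) zA] by simp
      then have "lt (D x p \<otimes> D p z) (D x p \<otimes> r')"
        using lt_mono[of "D p z" r' "D x p"] m_comm Gmetric_facts[OF D p(1) zA] Dxp r'c by simp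
      moreover have "leq (D x z) (D x p \<otimes> D p z)" using D xr(1) p(1) zA unfolding is_G_metric_def by blast
      ultimately have "lt (D x z) r" using le_lt_trans r'eq Gmetric_facts[OF D xr(1) zA]
        Gmetric_facts[OF D p(1) zA] Dxp r'c by (metis m_closed)
      then show "z \<in> U" using xr zA by simp
    qed
    ultimately show "\<exists>V\<in>{{y \<in> A. ?d x y \<le> r \<and> ?d x y \<noteq> r} | x r. x \<in> A \<and> r \<in> {0..} - {0}}. p \<in> V \<and> V \<subseteq> U"
      by blast
  qed
qed

end


definition Kof :: "real \<Rightarrow> nat" where "Kof v = (LEAST n. (1/2::real)^n \<le> v)"

definition Dofd :: "'g monoid \<Rightarrow> (nat \<Rightarrow> 'g) \<Rightarrow> ('a \<Rightarrow> 'a \<Rightarrow> real) \<Rightarrow> 'a \<Rightarrow> 'a \<Rightarrow> 'g" where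
  "Dofd G g d x y = (if x = y then \<one>\<^bsub>G\<^esub> else g (Kof (d x y)))"

lemma Kof_le: "0 < v \<Longrightarrow> (1/2::real)^(Kof v) \<le> v"
proof -
  assume "0 < v"
  then obtain n where "(1/2::real)^n < v" using half_pow_lt[of v] by blast
  then have "(1/2::real)^n \<le> v" by simp
  then show ?thesis unfolding Kof_def by (rule LeastI)
qed

lemma Kof_least: "(1/2::real)^n \<le> v \<Longrightarrow> Kof v \<le> n"
  unfolding Kof_def by (rule Least_le)

lemma ultra_facts:
  assumes "is_S_ultrametric A {0::real..} (\<le>) 0 d" "x \<in> A" "y \<in> A"
  shows "0 \<le> d x y" "x \<noteq> y \<Longrightarrow> 0 < d x y" "d x x = 0" "d x y = d y x"
proof -
  note h0 = assms(1)[unfolded is_S_ultrametric_def]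
  note h = h0[THEN conjunct1] h0[THEN conjunct2, THEN conjunct1] h0[THEN conjunct2, THEN conjunct2, THEN conjunct1]
  show "0 \<le> d x y" using h(1) assms(2,3) by simp
  show "d x x = 0" using h(2) assms(2) by simp
  show "d x y = d y x" using h(3) assms(2,3) by simp
  show "x \<noteq> y \<Longrightarrow> 0 < d x y" using h(1,2) assms(2,3) by fastforce
qed

lemma ultra_ineq:
  assumes "is_S_ultrametric A {0::real..} (\<le>) 0 d" "x \<in> A" "y \<in> A" "z \<in> A"
  shows "d x y \<le> d x z \<or> d x y \<le> d z y"
proof -
  note h0 = assms(1)[unfolded is_S_ultrametric_def]
  show ?thesis using h0[THEN conjunct2, THEN conjunct2, THEN conjunct2] assms(2-4) by simp
qed

context olg begin

lemma g_lt_iff: assumes gc: "\<And>k. g k \<in> carrier G" and gsuc: "\<And>k. lll (g (Suc k)) (g k)"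
  shows "lt (g a) (g b) \<longleftrightarrow> b < a"
proof
  assume l: "lt (g a) (g b)"
  show "b < a"
  proof (rule ccontr)
    assume "\<not> b < a" then have "a = b \<or> a < b" by auto
    then show False
    proof
      assume "a = b" then show False using l lt_iff by simp
    next
      assume "a < b" then have "lt (g b) (g a)" using llseq_mono[of g, OF gc gsuc] ll_lt gc by blast
      then show False using l lt_iff antisym gc by metis
    qed
  qed
next
  assume "b < a" then show "lt (g a) (g b)" using llseq_mono[of g, OF gc gsuc] ll_lt gc by blast
qed

lemma Dofd_props:
  assumes gpos: "\<And>k. g k \<in> pos" and gsuc: "\<And>k. lll (g (Suc k)) (g k)"
    and U: "is_S_ultrametric A {0::real..} (\<le>) 0 d"
  shows "\<And>x y. x \<in> A \<Longrightarrow> y \<in> A \<Longrightarrow> lt (Dofd G g d x y) (g m) \<longleftrightarrow> d x y < (1/2)^m"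
    and "\<And>a b a' b'. a \<in> A \<Longrightarrow> b \<in> A \<Longrightarrow> a' \<in> A \<Longrightarrow> b' \<in> A \<Longrightarrow> d a b \<le> d a' b' \<Longrightarrow>
          leq (Dofd G g d a b) (Dofd G g d a' b')"
    and "\<And>x y. x \<in> A \<Longrightarrow> y \<in> A \<Longrightarrow> Dofd G g d x y \<in> carrier G"
    and "\<And>x y. x \<in> A \<Longrightarrow> y \<in> A \<Longrightarrow> leq \<one> (Dofd G g d x y)"
proof -
  have gc: "\<And>k. g k \<in> carrier G" using gpos pos_carrier by auto
  have g1: "\<And>k. lt \<one> (g k)" using gpos pos_iff by auto
  show c: "\<And>x y. x \<in> A \<Longrightarrow> y \<in> A \<Longrightarrow> Dofd G g d x y \<in> carrier G"
    unfolding Dofd_def using gc by simp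
  have nn: "\<And>x y. x \<in> A \<Longrightarrow> y \<in> A \<Longrightarrow> leq \<one> (Dofd G g d x y)"
    unfolding Dofd_def using g1 lt_iff refl by simp
  then show "\<And>x y. x \<in> A \<Longrightarrow> y \<in> A \<Longrightarrow> leq \<one> (Dofd G g d x y)" .
  fix x y assume xy: "x \<in> A" "y \<in> A"
  show "lt (Dofd G g d x y) (g m) \<longleftrightarrow> d x y < (1/2)^m"
  proof (cases "x = y")
    case True then show ?thesis unfolding Dofd_def using g1 ultra_facts[OF U xy] by simp
  next
    case False
    then have v: "0 < d x y" using ultra_facts[OF U xy] by simp
    have "lt (Dofd G g d x y) (g m) \<longleftrightarrow> m < Kof (d x y)"
      unfolding Dofd_def using False g_lt_iff[of g, OF gc gsuc] by simp
    also have "\<dots> \<longleftrightarrow> d x y < (1/2)^m"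
    proof
      assume "m < Kof (d x y)"
      then show "d x y < (1/2)^m" using Kof_least[of m "d x y"] by force
    next
      assume a: "d x y < (1/2)^m"
      show "m < Kof (d x y)"
      proof (rule ccontr)
        assume "\<not> m < Kof (d x y)"
        then have "(1/2::real)^m \<le> (1/2)^(Kof (d x y))"
          using power_decreasing_iff[of "1/2::real" m "Kof (d x y)"] by simp
        then show False using Kof_le[OF v] a by linarith
      qed
    qed
    finally show ?thesis .
  qed
  show "leq (Dofd G g d a b) (Dofd G g d a' b')"
    if ab: "a \<in> A" "b \<in> A" "a' \<in> A" "b' \<in> A" and le: "d a b \<le> d a' b'" for a b a' b'
  proof (cases "a = b")
    case True then show ?thesis using nn[OF ab(3,4)] unfolding Dofd_def by simp
  next
    case False
    then have v: "0 < d a b" using ultra_facts[OF U ab(1,2)] by simp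
    then have "0 < d a' b'" using le by simp
    then have ne: "a' \<noteq> b'" using ultra_facts[OF U ab(3,3)] by auto
    have "Kof (d a' b') \<le> Kof (d a b)" using Kof_least Kof_le[OF v] le by (meson order_trans)
    then have "Kof (d a' b') = Kof (d a b) \<or> Kof (d a' b') < Kof (d a b)" by auto
    then have "leq (g (Kof (d a b))) (g (Kof (d a' b')))"
      using g_lt_iff[of g, OF gc gsuc] refl gc lt_iff by metis
    then show ?thesis unfolding Dofd_def using False ne by simp
  qed
qed

lemma Dofd_metric:
  assumes gpos: "\<And>k. g k \<in> pos" and gsuc: "\<And>k. lll (g (Suc k)) (g k)"
    and gord: "\<And>r. r \<in> pos \<Longrightarrow> \<exists>n. lt (g n) r"
    and U: "is_S_ultrametric A {0::real..} (\<le>) 0 d"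
  shows "is_G_metric A G leq (Dofd G g d)"
    and "G_metric_topology A G leq (Dofd G g d) = S_ultrametric_topology A {0::real..} (\<le>) 0 d"
proof -
  let ?D = "Dofd G g d"
  note P = Dofd_props[of g A d, OF gpos gsuc U]
  have g1: "\<And>k. lt \<one> (g k)" using gpos pos_iff by auto
  have gc: "\<And>k. g k \<in> carrier G" using gpos pos_carrier by auto
  have Dxx: "\<And>x. ?D x x = \<one>" unfolding Dofd_def by simp
  have Dmax: "leq (?D x y) (?D x z) \<or> leq (?D x y) (?D z y)" if "x \<in> A" "y \<in> A" "z \<in> A" for x y z
    using ultra_ineq[OF U that] P(2) that by blast
  show "is_G_metric A G leq ?D"
    unfolding is_G_metric_def
  proof (intro conjI ballI)
    fix x y assume xy: "x \<in> A" "y \<in> A"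
    show "?D x y \<in> carrier G" using P(3) xy .
    show "leq \<one> (?D x y)" using P(4) xy .
    show "?D x y = ?D y x" unfolding Dofd_def using ultra_facts[OF U xy] by auto
    have "g k \<noteq> \<one>" for k using g1[of k] lt_iff by metis
    then show "(?D x y = \<one>) = (x = y)" unfolding Dofd_def by auto
  next
    fix x y z assume xyz: "x \<in> A" "y \<in> A" "z \<in> A"
    have c: "?D x y \<in> carrier G" "?D x z \<in> carrier G" "?D z y \<in> carrier G" using P(3) xyz by auto
    have n: "leq \<one> (?D x z)" "leq \<one> (?D z y)" using P(4) xyz by auto
    have "leq (?D x z) (?D x z \<otimes> ?D z y)" using le_mult_nonneg c n by simp
    moreover have "leq (?D z y) (?D x z \<otimes> ?D z y)" using mono[OF one_closed c(2) c(3) n(1)] c by simp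
    ultimately show "leq (?D x y) (?D x z \<otimes> ?D z y)"
      using Dmax[OF xyz] trans c m_closed by metis
  qed
  show "G_metric_topology A G leq ?D = S_ultrametric_topology A {0::real..} (\<le>) 0 d"
    unfolding S_ultrametric_topology_def G_metric_topology_def
  proof (rule gen_top_eq)
    fix U p assume "U \<in> {{y \<in> A. d x y \<le> r \<and> d x y \<noteq> r} | x r. x \<in> A \<and> r \<in> {0..} - {0}}" "p \<in> U"
    then obtain x r where xr0: "x \<in> A" "r \<in> {0..} - {0}" "U = {y \<in> A. d x y \<le> r \<and> d x y \<noteq> r}"
      by blast
    then have xr: "x \<in> A" "r > 0" "U = {y \<in> A. d x y < r}" by auto
    have p: "p \<in> A" "d x p < r" using xr \<open>p \<in> U\<close> by auto
    obtain n where n: "(1/2)^n < r" using half_pow_lt[OF xr(2)] by blast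
    let ?V = "{y \<in> A. lt (?D p y) (g n)}"
    have "?V \<in> {{y \<in> A. lt (?D x y) r} | x r. x \<in> A \<and> r \<in> carrier G \<and> lt \<one> r}"
      using p gc g1 by blast
    moreover have "p \<in> ?V" using p g1 Dxx by simp
    moreover have "?V \<subseteq> U"
    proof
      fix z assume z: "z \<in> ?V"
      then have "d p z < (1/2)^n" using P(1) p by auto
      then have "d p z < r" using n by simp
      then show "z \<in> U" using ultra_ball[OF U xr(1) p(1) _ p(2)] z xr(3) by simp
    qed
    ultimately show "\<exists>V\<in>{{y \<in> A. lt (?D x y) r} | x r. x \<in> A \<and> r \<in> carrier G \<and> lt \<one> r}. p \<in> V \<and> V \<subseteq> U"
      by blast
  next
    fix U p assume "U \<in> {{y \<in> A. lt (?D x y) r} | x r. x \<in> A \<and> r \<in> carrier G \<and> lt \<one> r}" "p \<in> U"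
    then obtain x r where xr: "x \<in> A" "r \<in> carrier G" "lt \<one> r" "U = {y \<in> A. lt (?D x y) r}" by blast
    have p: "p \<in> A" "lt (?D x p) r" using xr \<open>p \<in> U\<close> by auto
    obtain n where n: "lt (g n) r" using gord xr(2,3) pos_iff by blast
    let ?V = "{y \<in> A. d p y \<le> (1/2)^n \<and> d p y \<noteq> (1/2)^n}"
    have "?V \<in> {{y \<in> A. d x y \<le> r \<and> d x y \<noteq> r} | x r. x \<in> A \<and> r \<in> {0..} - {0}}"
      using p by force
    moreover have "p \<in> ?V" using p ultra_facts[OF U p(1) p(1)] by simp
    moreover have "?V \<subseteq> U"
    proof
      fix z assume z: "z \<in> ?V"
      then have zA: "z \<in> A" and "d p z < (1/2)^n" by auto
      then have "lt (?D p z) (g n)" using P(1) p by simp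
      then have l2: "lt (?D p z) r" using lt_trans[OF P(3)[OF p(1) zA] gc xr(2)] n by simp
      have "lt (?D x z) r"
        using Dmax[OF xr(1) zA p(1)] le_lt_trans[OF P(3)[OF xr(1) zA] P(3)[OF xr(1) p(1)] xr(2) _ p(2)]
          le_lt_trans[OF P(3)[OF xr(1) zA] P(3)[OF p(1) zA] xr(2) _ l2] by blast
      then show "z \<in> U" using xr zA by simp
    qed
    ultimately show "\<exists>V\<in>{{y \<in> A. d x y \<le> r \<and> d x y \<noteq> r} | x r. x \<in> A \<and> r \<in> {0..} - {0}}. p \<in> V \<and> V \<subseteq> U"
      by blast
  qed
qed

end


definition ppos :: "int poly \<Rightarrow> bool" where
  "ppos p \<longleftrightarrow> (\<exists>n. coeff p n > 0 \<and> (\<forall>i<n. coeff p i = 0))"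

lemma ppos_add: assumes "ppos p" "ppos q" shows "ppos (p + q)"
proof -
  obtain n where n: "coeff p n > 0" "\<forall>i<n. coeff p i = 0" using assms(1) unfolding ppos_def by blast
  obtain m where m: "coeff q m > 0" "\<forall>i<m. coeff q i = 0" using assms(2) unfolding ppos_def by blast
  show ?thesis unfolding ppos_def
  proof (cases "n \<le> m")
    case True
    then have "coeff (p + q) n > 0" using n m by (cases "n = m") auto
    moreover have "\<forall>i<n. coeff (p + q) i = 0" using n m True by simp
    ultimately show "\<exists>n. coeff (p + q) n > 0 \<and> (\<forall>i<n. coeff (p + q) i = 0)" by blast
  next
    case False
    then have "coeff (p + q) m > 0" using n m by simp
    moreover have "\<forall>i<m. coeff (p + q) i = 0" using n m False by simp
    ultimately show "\<exists>n. coeff (p + q) n > 0 \<and> (\<forall>i<n. coeff (p + q) i = 0)" by blast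
  qed
qed

lemma ppos_total: assumes "p \<noteq> 0" shows "ppos p \<or> ppos (- p)"
proof -
  have "\<exists>n. coeff p n \<noteq> 0" using assms by (metis coeff_0 poly_eqI)
  then obtain n where n: "coeff p n \<noteq> 0" "\<forall>i<n. coeff p i = 0"
    using exists_least_iff[of "\<lambda>n. coeff p n \<noteq> 0"] by blast
  show ?thesis
  proof (cases "coeff p n > 0")
    case True then show ?thesis unfolding ppos_def using n by blast
  next
    case False then have "coeff (- p) n > 0" using n by simp
    then show ?thesis unfolding ppos_def using n by auto
  qed
qed

lemma ppos_asym: assumes "ppos p" shows "\<not> ppos (- p)"
proof
  assume "ppos (- p)"
  then obtain m where m: "coeff (- p) m > 0" "\<forall>i<m. coeff (- p) i = 0" unfolding ppos_def by blast
  obtain n where n: "coeff p n > 0" "\<forall>i<n. coeff p i = 0" using assms(1) unfolding ppos_def by blast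
  have "n < m \<or> n = m \<or> m < n" by auto
  then show False using n m by auto
qed

lemma ppos_nz: "ppos p \<Longrightarrow> p \<noteq> 0"
  unfolding ppos_def by auto

definition ple :: "int poly \<Rightarrow> int poly \<Rightarrow> bool" where
  "ple p q \<longleftrightarrow> p = q \<or> ppos (q - p)"

lemma countable_poly_inj: "\<exists>h :: int poly \<Rightarrow> nat. inj h"
proof -
  have "inj (to_nat \<circ> coeffs :: int poly \<Rightarrow> nat)"
    unfolding inj_def by (simp add: coeffs_eq_iff)
  then show ?thesis by blast
qed

lemma poly_into_g: assumes "infinite (UNIV :: 'g set)" shows "\<exists>e :: int poly \<Rightarrow> 'g. inj e"
proof -
  obtain f :: "nat \<Rightarrow> 'g" where f: "inj f" using infinite_countable_subset[OF assms] by blast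
  obtain h :: "int poly \<Rightarrow> nat" where h: "inj h" using countable_poly_inj by blast
  have "inj (f \<circ> h)" using f h by (simp add: inj_compose)
  then show ?thesis by blast
qed

definition PG :: "(int poly \<Rightarrow> 'g) \<Rightarrow> 'g monoid" where
  "PG e = \<lparr>carrier = range e, mult = (\<lambda>a b. e (inv_into UNIV e a + inv_into UNIV e b)), one = e 0\<rparr>"

definition PL :: "(int poly \<Rightarrow> 'g) \<Rightarrow> 'g \<Rightarrow> 'g \<Rightarrow> bool" where
  "PL e a b \<longleftrightarrow> ple (inv_into UNIV e a) (inv_into UNIV e b)"

lemma PG_simps:
  assumes "inj e"
  shows "carrier (PG e) = range e" "e p \<otimes>\<^bsub>PG e\<^esub> e q = e (p + q)" "\<one>\<^bsub>PG e\<^esub> = e 0"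
    "PL e (e p) (e q) \<longleftrightarrow> ple p q"
  using assms unfolding PG_def PL_def by (auto simp: inv_f_f)

lemma PG_lin: assumes "inj e" shows "lin_ord_ab_group (PG e) (PL e)"
proof -
  note S = PG_simps[OF assms]
  have cg: "comm_group (PG e)"
  proof (rule comm_groupI)
    fix x y assume "x \<in> carrier (PG e)" "y \<in> carrier (PG e)"
    then show "x \<otimes>\<^bsub>PG e\<^esub> y \<in> carrier (PG e)" using S by auto
  next
    show "\<one>\<^bsub>PG e\<^esub> \<in> carrier (PG e)" using S by auto
  next
    fix x y z assume "x \<in> carrier (PG e)" "y \<in> carrier (PG e)" "z \<in> carrier (PG e)"
    then show "x \<otimes>\<^bsub>PG e\<^esub> y \<otimes>\<^bsub>PG e\<^esub> z = x \<otimes>\<^bsub>PG e\<^esub> (y \<otimes>\<^bsub>PG e\<^esub> z)"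
      using S by (auto simp: add.assoc)
  next
    fix x y assume "x \<in> carrier (PG e)" "y \<in> carrier (PG e)"
    then show "x \<otimes>\<^bsub>PG e\<^esub> y = y \<otimes>\<^bsub>PG e\<^esub> x" using S by (auto simp: add.commute)
  next
    fix x assume "x \<in> carrier (PG e)"
    then show "\<one>\<^bsub>PG e\<^esub> \<otimes>\<^bsub>PG e\<^esub> x = x" using S by auto
  next
    fix x assume "x \<in> carrier (PG e)"
    then obtain p where p: "x = e p" using S by auto
    have "e (- p) \<in> carrier (PG e) \<and> e (- p) \<otimes>\<^bsub>PG e\<^esub> x = \<one>\<^bsub>PG e\<^esub>" using S p by simp
    then show "\<exists>y\<in>carrier (PG e). y \<otimes>\<^bsub>PG e\<^esub> x = \<one>\<^bsub>PG e\<^esub>" by blast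
  qed
  show ?thesis unfolding lin_ord_ab_group_def
  proof (intro conjI cg ballI impI)
    fix x assume "x \<in> carrier (PG e)"
    then show "PL e x x" using S by (auto simp: ple_def)
  next
    fix x y assume "x \<in> carrier (PG e)" "y \<in> carrier (PG e)" "PL e x y \<and> PL e y x"
    then obtain p q where "x = e p" "y = e q" "ple p q" "ple q p" using S by auto
    then show "x = y" unfolding ple_def using ppos_asym[of "q - p"] by (auto simp: minus_diff_eq)
  next
    fix x y z assume "x \<in> carrier (PG e)" "y \<in> carrier (PG e)" "z \<in> carrier (PG e)" "PL e x y \<and> PL e y z"
    then obtain p q r where "x = e p" "y = e q" "z = e r" "ple p q" "ple q r" using S by auto
    then show "PL e x z" using S ppos_add[of "r - q" "q - p"] unfolding ple_def by auto
  next
    fix x y assume "x \<in> carrier (PG e)" "y \<in> carrier (PG e)"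
    then obtain p q where "x = e p" "y = e q" using S by auto
    then show "PL e x y \<or> PL e y x" using S ppos_total[of "q - p"] unfolding ple_def
      by (auto simp: minus_diff_eq)
  next
    fix x y z assume "x \<in> carrier (PG e)" "y \<in> carrier (PG e)" "z \<in> carrier (PG e)" "PL e x y"
    then obtain p q r where "x = e p" "y = e q" "z = e r" "ple p q" using S by auto
    then show "PL e (x \<otimes>\<^bsub>PG e\<^esub> z) (y \<otimes>\<^bsub>PG e\<^esub> z)" using S unfolding ple_def by auto
  qed
qed

lemma PG_pow: assumes "inj e" shows "e p [^]\<^bsub>PG e\<^esub> (n::nat) = e (smult (of_nat n) p)"
proof (induction n)
  case 0 then show ?case using PG_simps[OF assms] by simp
next
  case (Suc n) then show ?case using PG_simps[OF assms] by (simp add: smult_add_left add.commute)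
qed

lemma PG_lt: assumes "inj e" shows "grp_lt (PG e) (PL e) (e p) (e q) \<longleftrightarrow> ppos (q - p)"
  using PG_simps[OF assms] assms unfolding grp_lt_def ple_def by (auto simp: inj_eq dest: ppos_nz)

lemma PG_good: assumes "inj e"
  shows "goodseq (PG e) (PL e) (\<lambda>n. e (monom 1 n))"
proof -
  interpret olg "PG e" "PL e" using olgI[OF PG_lin[OF assms]] .
  note S = PG_simps[OF assms]
  let ?g = "\<lambda>n. e (monom 1 n)"
  have gpos: "?g n \<in> pos" for n
  proof -
    have "ppos (monom 1 n - 0)" unfolding ppos_def by (intro exI[of _ n]) simp
    then show ?thesis unfolding pos_iff using PG_lt[OF assms, of 0 "monom 1 n"] S by simp
  qed
  have gsuc: "lll (?g (Suc n)) (?g n)" for n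
    unfolding ll_def
  proof (intro allI impI)
    fix k :: nat assume "k \<ge> 1"
    have "ppos (monom 1 n - smult (of_nat k) (monom 1 (Suc n)))"
      unfolding ppos_def by (intro exI[of _ n]) simp
    then show "lt (?g (Suc n) [^]\<^bsub>PG e\<^esub> k) (?g n)" using PG_pow[OF assms] PG_lt[OF assms] by simp
  qed
  have gord: "\<exists>n. lt (?g n) t" if t: "t \<in> pos" for t
  proof -
    obtain p where p: "t = e p" using t pos_carrier S by auto
    then have "ppos (p - 0)" using t pos_iff PG_lt[OF assms, of 0 p] S by simp
    then obtain m where m: "coeff p m > 0" "\<forall>i<m. coeff p i = 0" unfolding ppos_def by auto
    have "ppos (p - monom 1 (Suc m))" unfolding ppos_def using m by (intro exI[of _ m]) simp
    then show ?thesis using PG_lt[OF assms] p by blast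
  qed
  have "\<exists>n. \<not> lll t (?g n)" if t: "t \<in> pos" for t
  proof -
    obtain n where "lt (?g n) t" using gord t by blast
    then show ?thesis using le_not_ll[of t "?g n"] t gpos pos_carrier lt_iff by blast
  qed
  then show ?thesis unfolding goodseq_def using gpos gsuc by blast
qed



theorem proposition2p46:
  fixes X :: "'a topology"
  assumes "infinite (UNIV :: 'g set)"
  shows "Ult X {0::real..} (\<le>) 0 \<noteq> {} \<longleftrightarrow>
         (\<exists>(G :: 'g monoid) leq.
            lin_ord_ab_group G leq \<and>
            chi_is_omega0 (Arc_bot G leq) (Arc_bot_le G leq) None \<and>
            Met X G leq \<noteq> {})"
proof
  assume "Ult X {0::real..} (\<le>) 0 \<noteq> {}"
  then obtain d where d: "is_S_ultrametric (topspace X) {0::real..} (\<le>) 0 d"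
    "S_ultrametric_topology (topspace X) {0::real..} (\<le>) 0 d = X" unfolding Ult_def by blast
  obtain e :: "int poly \<Rightarrow> 'g" where e: "inj e" using poly_into_g[OF assms] by blast
  have lin: "lin_ord_ab_group (PG e) (PL e)" by (rule PG_lin[OF e])
  interpret olg "PG e" "PL e" using olgI[OF lin] .
  have gs: "goodseq (PG e) (PL e) (\<lambda>n. e (monom 1 n))" by (rule PG_good[OF e])
  have chi: "chi_is_omega0 (Arc_bot (PG e) (PL e)) (Arc_bot_le (PG e) (PL e)) None"
    by (rule goodseq_chi[OF gs])
  let ?g = "\<lambda>n. e (monom 1 n)"
  have gpos: "\<And>n. ?g n \<in> pos" and gsuc: "\<And>n. lll (?g (Suc n)) (?g n)"
    and gco: "\<And>t. t \<in> pos \<Longrightarrow> \<exists>n. \<not> lll t (?g n)"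
    using gs unfolding goodseq_def by auto
  have gc: "\<And>n. ?g n \<in> carrier (PG e)" using gpos pos_carrier by auto
  have gord: "\<exists>n. lt (?g n) r" if r: "r \<in> pos" for r
  proof -
    obtain n where n: "\<not> lll r (?g n)" using gco r by blast
    have rc: "r \<in> carrier (PG e)" using r pos_carrier by auto
    have "lll (?g (Suc n)) r" using ll_clsle[OF gc gc rc gsuc n] .
    then show ?thesis using ll_lt gc by blast
  qed
  note M = Dofd_metric[of ?g "topspace X" d, OF gpos gsuc gord d(1)]
  have "Dofd (PG e) ?g d \<in> Met X (PG e) (PL e)"
    unfolding Met_def using M d(2) by simp
  then show "\<exists>(G :: 'g monoid) leq. lin_ord_ab_group G leq \<and>
            chi_is_omega0 (Arc_bot G leq) (Arc_bot_le G leq) None \<and> Met X G leq \<noteq> {}"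
    using lin chi by blast
next
  assume "\<exists>(G :: 'g monoid) leq. lin_ord_ab_group G leq \<and>
            chi_is_omega0 (Arc_bot G leq) (Arc_bot_le G leq) None \<and> Met X G leq \<noteq> {}"
  then obtain G :: "'g monoid" and leq D where lin: "lin_ord_ab_group G leq"
    and chi: "chi_is_omega0 (Arc_bot G leq) (Arc_bot_le G leq) None"
    and D: "is_G_metric (topspace X) G leq D" "G_metric_topology (topspace X) G leq D = X"
    unfolding Met_def by blast
  interpret olg G leq using olgI[OF lin] .
  obtain g where gs: "goodseq G leq g" using chi_goodseq[OF chi] by blast
  have "dofD G leq g D \<in> Ult X {0::real..} (\<le>) 0"
    unfolding Ult_def using dofD_ultra[OF gs D(1)] dofD_top[OF gs D(1)] D(2) by simp
  then show "Ult X {0::real..} (\<le>) 0 \<noteq> {}" by blast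
qed


end
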